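(* Let $X$ be a set and $F,F'$ be forests of planar binary trees with leaves decorated by $X$, $F'=T_1\cdots T_k$, $k\ge1$. Write the formal sum $\mathcal{F}(F')=\sum_Sm(S)\,S$ (sum over distinct forests $S$, $m(S)\in\mathbb{N}$). Then in $T(\mathrm{Mag}(X))$: $F*F'=\sum_Sm(S)(-1)^{l(S)+k}\,F\curvearrowleft S$.
   Context: Trees/forests: $\mathrm{Mag}(X)$ is identified with the span of planar rooted binary trees with leaves decorated by $X$, with magmatic product $T_1*T_2=T_1\vee T_2$ (graft $T_1,T_2$ as left and right subtrees of a new root); $T(\mathrm{Mag}(X))$ has basis the forests (words of trees), product concatenation, trees primitive; $l(S)$ is the number of trees of a forest $S$. The product $*$ is extended to $T(\mathrm{Mag}(X))$ as the unique bilinear map with, for all $f,g,h$ and trees $y$: $\varepsilon(f*g)=\varepsilon(f)\varepsilon(g)$; $\Delta(f*g)=\Delta(f)*\Delta(g)$; $f*1=f$; $1*f=\varepsilon(f)1$; $f*(gy)=(f*g)*y-f*(g*y)$; $(fg)*h=(f*h^{(1)})(g*h^{(2)})$; $(f*g)*h=f*\big((g*h^{(1)})h^{(2)}\big)$. For a forest $F=F_1\cdots F_p$ and a forest $S=S_1\cdots S_n$: $F\curvearrowleft S_1=\sum_{i=1}^pF_1\cdots(F_i\vee S_1)\cdots F_p$ and, for $n\ge2$, $F\curvearrowleft S=(F\curvearrowleft S_1\cdots S_{n-1})*S_n$ (extended linearly in $F$). The formal sums (multisets) $\mathcal{F}$ of forests are defined recursively by $\mathcal{F}(T_1)=T_1$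 and $\mathcal{F}(T_1\cdots T_{j+1})=R_{T_{j+1}}\big(\mathcal{F}(T_1\cdots T_j)\big)+\sum_{i=1}^j\mathcal{F}\big(T_1\cdots T_{i-1}(T_i\vee T_{j+1})T_{i+1}\cdots T_j\big)$, where $R_{T}$ is the linear map appending the tree $T$ on the right of a forest. *)

theory Defs
  imports Main "HOL-Library.Poly_Mapping" "HOL-Library.Multiset"
begin

datatype 'x tree = Leaf 'x | Node "'x tree" "'x tree"
  (* Node T1 T2 = T1 \<or> T2 : graft T1, T2 as left and right subtrees of a new root *)

type_synonym 'x forest = "'x tree list"

(* Elements of T(Mag(X)) over the coefficient field 'k: finitely supported
   linear combinations of forests (basis = forests, product = concatenation) *)
type_synonym ('x, 'k) TM = "'x forest \<Rightarrow>\<^sub>0 'k"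
(* Elements of T(Mag(X)) \<otimes> T(Mag(X)) *)
type_synonym ('x, 'k) TM2 = "('x forest \<times> 'x forest) \<Rightarrow>\<^sub>0 'k"

definition smul :: "'k::field \<Rightarrow> ('a \<Rightarrow>\<^sub>0 'k) \<Rightarrow> ('a \<Rightarrow>\<^sub>0 'k)" where
  "smul c p = Poly_Mapping.map ((*) c) p"

definition basis :: "'a \<Rightarrow> ('a \<Rightarrow>\<^sub>0 'k::field)" where
  "basis a = Poly_Mapping.single a 1"

definition lin :: "('a \<Rightarrow> ('b \<Rightarrow>\<^sub>0 'k::field)) \<Rightarrow> ('a \<Rightarrow>\<^sub>0 'k) \<Rightarrow> ('b \<Rightarrow>\<^sub>0 'k)" where
  "lin \<phi> p = (\<Sum>a\<in>Poly_Mapping.keys p. smul (Poly_Mapping.lookup p a) (\<phi> a))"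

definition bilin :: "('a \<Rightarrow> 'b \<Rightarrow> ('c \<Rightarrow>\<^sub>0 'k::field)) \<Rightarrow> ('a \<Rightarrow>\<^sub>0 'k) \<Rightarrow> ('b \<Rightarrow>\<^sub>0 'k) \<Rightarrow> ('c \<Rightarrow>\<^sub>0 'k)" where
  "bilin s f g = lin (\<lambda>a. lin (\<lambda>b. s a b) g) f"

definition conc :: "('x, 'k::field) TM \<Rightarrow> ('x, 'k) TM \<Rightarrow> ('x, 'k) TM" where
  "conc f g = bilin (\<lambda>a b. basis (a @ b)) f g"

definition unitT :: "('x, 'k::field) TM" where
  "unitT = basis []"

definition eps :: "('x, 'k::field) TM \<Rightarrow> 'k" where
  "eps f = Poly_Mapping.lookup f []"

definition tens :: "('x, 'k::field) TM \<Rightarrow> ('x, 'k) TM \<Rightarrow> ('x, 'k) TM2" where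
  "tens u v = bilin (\<lambda>a b. basis (a, b)) u v"

definition tens_prod :: "(('x, 'k::field) TM \<Rightarrow> ('x, 'k) TM \<Rightarrow> ('x, 'k) TM)
    \<Rightarrow> ('x, 'k) TM2 \<Rightarrow> ('x, 'k) TM2 \<Rightarrow> ('x, 'k) TM2" where
  "tens_prod st P Q = bilin (\<lambda>(a, b) (c, d). tens (st (basis a) (basis c)) (st (basis b) (basis d))) P Q"

text \<open>Deshuffle coproduct of T(Mag(X)) (concatenation-multiplicative, trees primitive).\<close>
fun DeltaB :: "'x forest \<Rightarrow> ('x, 'k::field) TM2" where
  "DeltaB [] = basis ([], [])"
| "DeltaB (T # F) = lin (\<lambda>(a, b). basis (T # a, b) + basis (a, T # b)) (DeltaB F)"

definition Delta :: "('x, 'k::field) TM \<Rightarrow> ('x, 'k) TM2" where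
  "Delta f = lin DeltaB f"

text \<open>Sweedler-type expression  \<Sum> \<Phi>(h^(1), h^(2)).\<close>
definition sweedler :: "('x forest \<Rightarrow> 'x forest \<Rightarrow> ('x, 'k::field) TM) \<Rightarrow> ('x, 'k) TM \<Rightarrow> ('x, 'k) TM" where
  "sweedler \<Phi> h = lin (\<lambda>(a, b). \<Phi> a b) (Delta h)"

text \<open>The characterisation of the product * on T(Mag(X)): a bilinear map
  (given by its values s on pairs of basis forests, star = bilin s) extending
  the magmatic product T1 * T2 = T1 \<or> T2 on trees and satisfying the axioms.\<close>
definition is_mag_star :: "('x forest \<Rightarrow> 'x forest \<Rightarrow> ('x, 'k::field) TM) \<Rightarrow> bool" where
  "is_mag_star s \<longleftrightarrow>
     (let st = bilin s in
       (\<forall>T1 T2. st (basis [T1]) (basis [T2]) = basis [Node T1 T2]) \<and>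
       (\<forall>f g. eps (st f g) = eps f * eps g) \<and>
       (\<forall>f g. Delta (st f g) = tens_prod st (Delta f) (Delta g)) \<and>
       (\<forall>f. st f unitT = f) \<and>
       (\<forall>f. st unitT f = smul (eps f) unitT) \<and>
       (\<forall>f g y. st f (conc g (basis [y])) = st (st f g) (basis [y]) - st f (st g (basis [y]))) \<and>
       (\<forall>f g h. st (conc f g) h = sweedler (\<lambda>a b. conc (st f (basis a)) (st g (basis b))) h) \<and>
       (\<forall>f g h. st (st f g) h = st f (sweedler (\<lambda>a b. conc (st g (basis a)) (basis b)) h)))"

text \<open>F \<curvearrowleft> S for forests F, S = S1 ... Sn (n \<ge> 1).\<close>
definition graft :: "'x forest \<Rightarrow> 'x tree \<Rightarrow> ('x, 'k::field) TM" where
  "graft F T = (\<Sum>i<length F. basis (F[i := Node (F ! i) T]))"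

fun curv :: "('x forest \<Rightarrow> 'x forest \<Rightarrow> ('x, 'k::field) TM) \<Rightarrow> 'x forest \<Rightarrow> 'x forest \<Rightarrow> ('x, 'k) TM" where
  "curv s F [] = basis F"  (* not used: S is always nonempty *)
| "curv s F (S1 # Ss) = foldl (\<lambda>v T. bilin s v (basis [T])) (graft F S1) Ss"

function Fm :: "'x forest \<Rightarrow> 'x forest multiset" where
  "Fm Ts = (if length Ts \<le> 1 then {# Ts #}
            else (let T = last Ts; U = butlast Ts in
                  image_mset (\<lambda>S. S @ [T]) (Fm U)
                  + (\<Sum>i<length U. Fm (U[i := Node (U ! i) T]))))"
  by auto
termination
  by (relation "measure length") auto

end

theory Submission
  imports Defs
begin

lemma lookup_smul[simp]: "Poly_Mapping.lookup (smul c p) x = c * Poly_Mapping.lookup p x"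
  by (simp add: smul_def Poly_Mapping.map.rep_eq when_def)

lemma smul_0[simp]: "smul 0 p = 0" by (rule poly_mapping_eqI) simp
lemma smul_1[simp]: "smul 1 p = p" by (rule poly_mapping_eqI) simp
lemma smul_zero[simp]: "smul c 0 = 0" by (rule poly_mapping_eqI) simp
lemma smul_add: "smul c (p + q) = smul c p + smul c q"
  by (rule poly_mapping_eqI) (simp add: lookup_add algebra_simps)
lemma smul_add_left: "smul (c + d) p = smul c p + smul d p"
  by (rule poly_mapping_eqI) (simp add: lookup_add algebra_simps)
lemma smul_smul: "smul c (smul d p) = smul (c * d) p"
  by (rule poly_mapping_eqI) (simp add: algebra_simps)
lemma smul_neg: "smul (- c) p = - smul c p"
  by (rule poly_mapping_eqI) simp
lemma smul_sum: "smul c (sum f A) = (\<Sum>a\<in>A. smul c (f a))"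
  by (rule poly_mapping_eqI) (simp add: lookup_sum sum_distrib_left)
lemma smul_sum_mset: "smul c (sum_mset (image_mset f M)) = sum_mset (image_mset (\<lambda>a. smul c (f a)) M)"
  by (induction M) (simp_all add: smul_add)

lemma lin_superset:
  assumes "finite A" "Poly_Mapping.keys p \<subseteq> A"
  shows "lin \<phi> p = (\<Sum>a\<in>A. smul (Poly_Mapping.lookup p a) (\<phi> a))"
  unfolding lin_def
  by (rule sum.mono_neutral_left) (use assms in \<open>auto simp: in_keys_iff\<close>)

lemma lin_add: "lin \<phi> (p + q) = lin \<phi> p + lin \<phi> q"
proof -
  let ?A = "Poly_Mapping.keys p \<union> Poly_Mapping.keys q"
  have "lin \<phi> (p + q) = (\<Sum>a\<in>?A. smul (Poly_Mapping.lookup (p+q) a) (\<phi> a))"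
    by (rule lin_superset) (auto simp: keys_add)
  also have "\<dots> = (\<Sum>a\<in>?A. smul (Poly_Mapping.lookup p a) (\<phi> a)) + (\<Sum>a\<in>?A. smul (Poly_Mapping.lookup q a) (\<phi> a))"
    by (simp add: lookup_add smul_add_left sum.distrib)
  also have "\<dots> = lin \<phi> p + lin \<phi> q"
    by (simp add: lin_superset[of "?A" p] lin_superset[of "?A" q])
  finally show ?thesis .
qed

lemma lin_zero[simp]: "lin \<phi> 0 = 0" by (simp add: lin_def)

lemma lin_smul: "lin \<phi> (smul c p) = smul c (lin \<phi> p)"
proof -
  have "lin \<phi> (smul c p) = (\<Sum>a\<in>Poly_Mapping.keys p. smul (Poly_Mapping.lookup (smul c p) a) (\<phi> a))"
    by (rule lin_superset) (auto simp: in_keys_iff)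
  then show ?thesis by (simp add: lin_def smul_sum smul_smul)
qed

lemma lin_neg: "lin \<phi> (- p) = - lin \<phi> p"
  using lin_smul[of \<phi> "-1" p] by (simp add: smul_neg[of 1, simplified] flip: smul_neg)

lemma lin_sum: "lin \<phi> (sum f A) = (\<Sum>a\<in>A. lin \<phi> (f a))"
  by (induction A rule: infinite_finite_induct) (simp_all add: lin_add)

lemma lin_sum_mset: "lin \<phi> (sum_mset (image_mset f M)) = sum_mset (image_mset (\<lambda>a. lin \<phi> (f a)) M)"
  by (induction M) (simp_all add: lin_add)

lemma lin_basis[simp]: "lin \<phi> (basis a) = \<phi> a"
  by (simp add: lin_def basis_def)

lemma lin_fun_add: "lin (\<lambda>a. \<phi> a + \<psi> a) p = lin \<phi> p + lin \<psi> p"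
  by (simp add: lin_def smul_add sum.distrib)

lemma lin_fun_zero: "lin (\<lambda>a. 0) p = 0"
  by (simp add: lin_def)

lemma lin_fun_sum: "lin (\<lambda>a. \<Sum>i\<in>I. \<phi> i a) p = (\<Sum>i\<in>I. lin (\<phi> i) p)"
  by (induction I rule: infinite_finite_induct) (simp_all add: lin_fun_add lin_fun_zero)

lemma bilin_basis[simp]: "bilin s (basis a) (basis b) = s a b"
  by (simp add: bilin_def)

lemma bilin_add1: "bilin s (f + g) h = bilin s f h + bilin s g h"
  by (simp add: bilin_def lin_add)
lemma bilin_smul1: "bilin s (smul c f) h = smul c (bilin s f h)"
  by (simp add: bilin_def lin_smul)
lemma bilin_sum_mset1: "bilin s (sum_mset (image_mset f M)) h = sum_mset (image_mset (\<lambda>a. bilin s (f a) h) M)"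
  by (simp add: bilin_def lin_sum_mset)
lemma bilin_add2: "bilin s f (g + h) = bilin s f g + bilin s f h"
  by (simp add: bilin_def lin_add lin_fun_add)
lemma bilin_sum2: "bilin s f (sum g A) = (\<Sum>a\<in>A. bilin s f (g a))"
  by (simp add: bilin_def lin_sum lin_fun_sum)
lemma bilin_zero1[simp]: "bilin s 0 h = 0" by (simp add: bilin_def)

lemma conc_basis[simp]: "conc (basis a) (basis b) = basis (a @ b)"
  by (simp add: conc_def)
lemma conc_add2: "conc f (g + h) = conc f g + conc f h"
  by (simp add: conc_def bilin_add2)
lemma conc_sum2: "conc f (sum g A) = (\<Sum>a\<in>A. conc f (g a))"
  by (simp add: conc_def bilin_sum2)

lemma DeltaB_single: "DeltaB [T] = (basis ([T], []) + basis ([], [T]) :: ('x,'k::field) TM2)"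
  by simp

lemma sweedler_single: "sweedler \<Phi> (basis [T]) = \<Phi> [T] [] + \<Phi> [] [T]"
  by (simp add: sweedler_def Delta_def lin_add del: DeltaB.simps add: DeltaB_single)

declare Fm.simps[simp del]

lemma sum_mset_image_sum: "sum_mset (image_mset g (\<Sum>i\<in>I. M i)) = (\<Sum>i\<in>I. sum_mset (image_mset g (M i)))"
  by (induction I rule: infinite_finite_induct) simp_all

lemma sum_mset_neg: "sum_mset (image_mset (\<lambda>x. - (f x :: 'a::ab_group_add)) M) = - sum_mset (image_mset f M)"
  by (induction M) simp_all

lemma in_sum_mset_set: "x \<in># (\<Sum>i\<in>I. M i) \<Longrightarrow> \<exists>i\<in>I. x \<in># M i"
  by (induction I rule: infinite_finite_induct) auto

lemma Fm_nonempty: "Ts \<noteq> [] \<Longrightarrow> S \<in># Fm Ts \<Longrightarrow> S \<noteq> []"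
proof (induction Ts arbitrary: S rule: Fm.induct)
  case (1 Ts)
  show ?case
  proof (cases "length Ts \<le> 1")
    case True
    then show ?thesis using 1(3,4) by (subst (asm) Fm.simps) simp
  next
    case False
    have "S \<in># image_mset (\<lambda>S. S @ [last Ts]) (Fm (butlast Ts))
        + (\<Sum>i<length (butlast Ts). Fm ((butlast Ts)[i := Node (butlast Ts ! i) (last Ts)]))"
      using 1(4) False by (subst (asm) Fm.simps) (simp add: Let_def)
    then consider "S \<in># image_mset (\<lambda>S. S @ [last Ts]) (Fm (butlast Ts))"
      | i where "i < length (butlast Ts)" "S \<in># Fm ((butlast Ts)[i := Node (butlast Ts ! i) (last Ts)])"
      by (auto dest: in_sum_mset_set)
    then show ?thesis
    proof cases
      case 1 then show ?thesis by auto
    next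
      case (2 i)
      have ne: "(butlast Ts)[i := Node (butlast Ts ! i) (last Ts)] \<noteq> []" using 2(1) by (metis length_list_update less_nat_zero_code list.size(3))
      show ?thesis using "1.IH"(2)[OF False refl refl _ ne 2(2)] 2(1) False by (simp add: Let_def)
    qed
  qed
qed

lemma Fm_single: "Fm [T] = {#[T]#}"
  by (subst Fm.simps) simp

lemma Fm_snoc: "U \<noteq> [] \<Longrightarrow> Fm (U @ [T]) = image_mset (\<lambda>S. S @ [T]) (Fm U)
                  + (\<Sum>i<length U. Fm (U[i := Node (U ! i) T]))"
  by (subst Fm.simps) (simp add: Let_def)

lemma curv_snoc: "S \<noteq> [] \<Longrightarrow> curv s F (S @ [T]) = bilin s (curv s F S) (basis [T])"
  by (cases S) simp_all

context
  fixes s :: "'x forest \<Rightarrow> 'x forest \<Rightarrow> ('x, 'k::field) TM"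
  assumes ms: "is_mag_star s"
begin

lemma ax1: "bilin s (basis [T1]) (basis [T2]) = basis [Node T1 T2]"
  using ms by (simp add: is_mag_star_def Let_def)
lemma axL: "bilin s unitT f = smul (eps f) unitT"
  using ms by (simp add: is_mag_star_def Let_def)
lemma axR: "bilin s f unitT = f"
  using ms by (simp add: is_mag_star_def Let_def)
lemma axrec: "bilin s f (conc g (basis [y])) = bilin s (bilin s f g) (basis [y]) - bilin s f (bilin s g (basis [y]))"
  using ms by (simp add: is_mag_star_def Let_def)
lemma axconc: "bilin s (conc f g) h = sweedler (\<lambda>a b. conc (bilin s f (basis a)) (bilin s g (basis b))) h"
  using ms by (simp add: is_mag_star_def Let_def)

lemma axR': "s a [] = basis a"
  using axR[of "basis a"] by (simp add: unitT_def)

lemma graft_eq: "bilin s (basis F) (basis [T]) = graft F T"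
proof (induction F)
  case Nil
  have "bilin s (basis []) (basis [T]) = smul (eps (basis [T])) unitT"
    by (metis axL unitT_def)
  also have "eps (basis [T] :: ('x,'k) TM) = 0" by (simp add: eps_def basis_def lookup_single)
  finally show ?case by (simp add: graft_def)
next
  case (Cons A F0)
  have b: "basis (A # F0) = conc (basis [A]) (basis F0)" by simp
  have "bilin s (basis (A # F0)) (basis [T])
     = conc (basis [Node A T]) (basis F0) + conc (basis [A]) (graft F0 T)"
    unfolding b axconc sweedler_single using ax1 axR' Cons by simp
  also have "\<dots> = graft (A # F0) T"
    unfolding graft_def conc_sum2
    by (simp add: sum.lessThan_Suc_shift del: sum.lessThan_Suc)
  finally show ?case .
qed

lemma main: "length F' = n \<Longrightarrow> n \<ge> 1 \<Longrightarrow> bilin s (basis F) (basis F')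
       = (\<Sum>S\<in>#Fm F'. smul ((-1) ^ (length S + length F')) (curv s F S))"
proof (induction n arbitrary: F' rule: less_induct)
  case (less n)
  show ?case
  proof (cases "n = 1")
    case True
    then obtain T where F': "F' = [T]" using less(2) by (cases F') auto
    show ?thesis using graft_eq[of F T] by (simp add: F' Fm_single)
  next
    case False
    then have "F' \<noteq> []" using less by auto
    then obtain U T where F': "F' = U @ [T]" by (metis append_butlast_last_id)
    have lU: "length U = n - 1" "n - 1 < n" "n - 1 \<ge> 1" using less(2,3) False F' by auto
    then have Une: "U \<noteq> []" by auto
    define c where "c S = ((-1) ^ (length S + length U) :: 'k)" for S :: "'x forest"
    have IH: "bilin s (basis F) (basis V) = (\<Sum>S\<in>#Fm V. smul (c S) (curv s F S))"
      if "length V = length U" for V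
      using less(1)[OF lU(2), of V] that lU by (simp add: c_def)
    have b: "basis (U @ [T]) = conc (basis U) (basis [T])" by simp
    have "bilin s (basis F) (basis F')
       = bilin s (bilin s (basis F) (basis U)) (basis [T]) - bilin s (basis F) (graft U T)"
      unfolding F' b axrec graft_eq ..
    also have "bilin s (bilin s (basis F) (basis U)) (basis [T])
       = (\<Sum>S\<in>#Fm U. smul (c S) (curv s F (S @ [T])))"
      unfolding IH[OF refl] bilin_sum_mset1 bilin_smul1
      by (intro arg_cong[where f=sum_mset] image_mset_cong)
         (simp add: curv_snoc Fm_nonempty[OF Une])
    also have "bilin s (basis F) (graft U T)
       = (\<Sum>i<length U. \<Sum>S\<in>#Fm (U[i := Node (U ! i) T]). smul (c S) (curv s F S))"
      unfolding graft_def bilin_sum2 by (simp del: bilin_basis add: IH)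
    also have "(\<Sum>S\<in>#Fm F'. smul ((-1) ^ (length S + length F')) (curv s F S))
       = (\<Sum>S\<in>#Fm U. smul (c S) (curv s F (S @ [T])))
         + (\<Sum>i<length U. \<Sum>S\<in>#Fm (U[i := Node (U ! i) T]). - smul (c S) (curv s F S))"
      by (simp add: F' Fm_snoc[OF Une] sum_mset_image_sum c_def smul_neg[symmetric]
              multiset.map_comp o_def)
    ultimately show ?thesis by (simp add: sum_mset_neg sum_negf)
  qed
qed

end

theorem proposition4p3:
  fixes s :: "'x forest \<Rightarrow> 'x forest \<Rightarrow> ('x, 'k::field) TM"
    and F F' :: "'x forest"
  assumes "is_mag_star s"
    and "length F' \<ge> 1"
  shows "bilin s (basis F) (basis F')
       = (\<Sum>S\<in>#Fm F'. smul ((-1) ^ (length S + length F')) (curv s F S))"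
  using main[OF assms(1) refl assms(2)] .

end
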